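(* Let $I$ be a $Q$-interval of $\mathcal{P}$ with $D(I)=\{x_1,x_2,\ldots,x_r\}$, listed in the order of the children of the corresponding $Q$-node (so $\max Int(x_i)+1=\min Int(x_{i+1})$). Then $I$ is a $b$-nested common interval if and only if either $Int(x_1)$ is $b$-small and $I\setminus Int(x_1)$ is a $b$-nested common interval, or $Int(x_r)$ is $b$-small and $I\setminus Int(x_r)$ is a $b$-nested common interval.
   Context: Let $n\geq 1$, $K\geq 1$ and let $\mathcal{P}=\{P_1,\ldots,P_K\}$ be permutations of $\{1,\ldots,n\}$ with $P_1=(1,2,\ldots,n)$. For integers $i\leq j$ write $(i..j)=\{i,\ldots,j\}$. A common interval of $\mathcal{P}$ is a set of integers occupying consecutive positions in every $P_k$; all have the form $(i..j)$, and singletons and $(1..n)$ are common. Fix a positive integer $b$. A common interval $I$ is $b$-small if $|I|\leq b$, $b$-large otherwise; it is $b$-nested if $|I|=1$ or $I$ strictly contains a $b$-nested common interval $J$ with $|J|\geq|I|-b$ (recursive on size). Two intervals $(i..j)$, $(k..l)$ overlap if $i<k\leq j<l$ or $k<i\leq l<j$. A common interval is strong if it overlaps no other common interval. The PQ-tree $T$: nodes are the strong common intervals ($Int(x)$ is the interval of node $x$), root $(1..n)$, leaves the singletons, parent of $y$ is the node whose interval is the smallest strong common interval strictly containing $Int(y)$. A node $x$ with children set $D$ is a $P$-node if no union $\bigcup_{z\in D'}Int(z)$, $D'\subset D$, $2\leq|D'|<|D|$, is common; otherwise it is a $Q$-node with children ordered $y_1,\ldots,y_r$ so that $\max Int(y_i)+1=\min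 Int(y_{i+1})$. It is known that a set is a common interval iff it is $Int(x)$ for a node $x$ or the union of the intervals of consecutive children of a unique $Q$-node. The domain $D(I)$ of a common interval $I$ is the set of children of $x$ if $I=Int(x)$ is strong, and otherwise the set of consecutive children of the $Q$-node whose intervals have union $I$. A $P$-interval is a strong common interval $Int(x)$ with $x$ a $P$-node; all other common intervals are $Q$-intervals. *)

theory Defs
  imports Main
begin

definition common :: "nat list list \<Rightarrow> nat set \<Rightarrow> bool" where
  "common P S \<longleftrightarrow> S \<noteq> {} \<and>
     (\<forall>p\<in>set P. \<exists>i j. i \<le> j \<and> j < length p \<and> S = {p ! k | k. i \<le> k \<and> k \<le> j})"

definition small :: "nat \<Rightarrow> nat set \<Rightarrow> bool" where
  "small b I \<longleftrightarrow> card I \<le> b"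

definition large :: "nat \<Rightarrow> nat set \<Rightarrow> bool" where
  "large b I \<longleftrightarrow> card I > b"

inductive nested :: "nat list list \<Rightarrow> nat \<Rightarrow> nat set \<Rightarrow> bool" for P b where
  single: "common P I \<Longrightarrow> card I = 1 \<Longrightarrow> nested P b I"
| step: "common P I \<Longrightarrow> nested P b J \<Longrightarrow> J \<subset> I \<Longrightarrow> card I \<le> card J + b
          \<Longrightarrow> nested P b I"

definition overlap :: "nat set \<Rightarrow> nat set \<Rightarrow> bool" where
  "overlap A B \<longleftrightarrow>
     (Min A < Min B \<and> Min B \<le> Max A \<and> Max A < Max B) \<or>
     (Min B < Min A \<and> Min A \<le> Max B \<and> Max B < Max A)"

definition strong :: "nat list list \<Rightarrow> nat set \<Rightarrow> bool" where
  "strong P I \<longleftrightarrow> common P I \<and> (\<forall>J. common P J \<longrightarrow> \<not> overlap I J)"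

text \<open>PQ-tree: nodes are the strong common intervals; X is the parent of Y if X is the
  smallest strong common interval strictly containing Y.\<close>
definition is_parent :: "nat list list \<Rightarrow> nat set \<Rightarrow> nat set \<Rightarrow> bool" where
  "is_parent P X Y \<longleftrightarrow> strong P X \<and> strong P Y \<and> Y \<subset> X \<and>
     (\<forall>Z. strong P Z \<and> Y \<subset> Z \<longrightarrow> X \<subseteq> Z)"

definition children :: "nat list list \<Rightarrow> nat set \<Rightarrow> nat set set" where
  "children P X = {Y. is_parent P X Y}"

definition Pnode :: "nat list list \<Rightarrow> nat set \<Rightarrow> bool" where
  "Pnode P X \<longleftrightarrow> strong P X \<and>
     \<not> (\<exists>D'. D' \<subset> children P X \<and> 2 \<le> card D' \<and> card D' < card (children P X)
            \<and> common P (\<Union>D'))"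

definition Qnode :: "nat list list \<Rightarrow> nat set \<Rightarrow> bool" where
  "Qnode P X \<longleftrightarrow> strong P X \<and> \<not> Pnode P X"

definition P_interval :: "nat list list \<Rightarrow> nat set \<Rightarrow> bool" where
  "P_interval P I \<longleftrightarrow> strong P I \<and> Pnode P I"

definition Q_interval :: "nat list list \<Rightarrow> nat set \<Rightarrow> bool" where
  "Q_interval P I \<longleftrightarrow> common P I \<and> \<not> P_interval P I"

text \<open>Domain of a common interval: children of the node if strong, otherwise the set of
  consecutive children of the (unique) Q-node whose union is I.\<close>
definition domain :: "nat list list \<Rightarrow> nat set \<Rightarrow> nat set set" where
  "domain P I = (if strong P I then children P I
     else (THE D. \<exists>X. Qnode P X \<and> D \<subseteq> children P X \<and> \<Union>D = I \<and>
             (\<forall>Y\<in>children P X. Min I \<le> Min Y \<and> Max Y \<le> Max I \<longrightarrow> Y \<in> D)))"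

end

theory Submission imports Defs begin




definition ovl :: "nat set \<Rightarrow> nat set \<Rightarrow> bool" where
  "ovl A B \<longleftrightarrow> A \<inter> B \<noteq> {} \<and> \<not> A \<subseteq> B \<and> \<not> B \<subseteq> A"

lemma common_alt: "common P S \<longleftrightarrow> S \<noteq> {} \<and>
   (\<forall>p\<in>set P. \<exists>i j. i \<le> j \<and> j < length p \<and> S = (!) p ` {i..j})"
proof -
  have e: "\<And>p i j. {p ! k | k. i \<le> k \<and> k \<le> j} = (!) p ` {i..j}" by auto
  show ?thesis unfolding common_def by (simp only: e)
qed

lemma pos_diff:
  fixes i j k l :: nat
  assumes "{i..j} \<inter> {k..l} \<noteq> {}" "\<not> {i..j} \<subseteq> {k..l}" "\<not> {k..l} \<subseteq> {i..j}"
  shows "\<exists>i' j'. i \<le> i' \<and> i' \<le> j' \<and> j' \<le> j \<and> {i..j} - {k..l} = {i'..j'}"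
proof (cases "i < k")
  case True
  then have "l > j" using assms by auto
  then show ?thesis using True assms by (intro exI[of _ i] exI[of _ "k-1"]) auto
next
  case False
  then have "j > l" using assms by auto
  then show ?thesis using False assms by (intro exI[of _ "l+1"] exI[of _ j]) auto
qed

lemma Min_iv: "a \<le> c \<Longrightarrow> Min {a..c::nat} = a" by (rule Min_eqI) auto
lemma Max_iv: "a \<le> c \<Longrightarrow> Max {a..c::nat} = c" by (rule Max_eqI) auto

lemma ovl_overlap:
  fixes a c d e :: nat
  assumes "a \<le> c" "d \<le> e"
  shows "overlap {a..c} {d..e} \<longleftrightarrow> ovl {a..c} {d..e}"
proof -
  have i: "{a..c} \<inter> {d..e} \<noteq> {} \<longleftrightarrow> d \<le> c \<and> a \<le> e" using assms by auto
  have s1: "{a..c} \<subseteq> {d..e} \<longleftrightarrow> d \<le> a \<and> c \<le> e" using assms by auto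
  have s2: "{d..e} \<subseteq> {a..c} \<longleftrightarrow> a \<le> d \<and> e \<le> c" using assms by auto
  show ?thesis unfolding overlap_def ovl_def i s1 s2 Min_iv[OF assms(1)] Max_iv[OF assms(1)]
    Min_iv[OF assms(2)] Max_iv[OF assms(2)] using assms by auto
qed

locale perms =
  fixes n :: nat and P :: "nat list list"
  assumes n1: "n \<ge> 1" and Pne: "P \<noteq> []" and hdP: "hd P = [1..<n+1]"
    and perm: "\<forall>p\<in>set P. distinct p \<and> set p = {1..n}"
begin

lemma common_iv:
  assumes "common P S"
  shows "\<exists>a c. 1 \<le> a \<and> a \<le> c \<and> c \<le> n \<and> S = {a..c}"
proof -
  have "hd P \<in> set P" using Pne by simp
  then obtain i j where ij: "i \<le> j" "j < length (hd P)" "S = (!) (hd P) ` {i..j}"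
    using assms unfolding common_alt by blast
  have "(!) (hd P) ` {i..j} = {i+1..j+1}"
  proof
    have hk: "\<And>k. k < length (hd P) \<Longrightarrow> hd P ! k = Suc k" unfolding hdP by (simp del: upt_Suc)
    show "(!) (hd P) ` {i..j} \<subseteq> {i+1..j+1}" using ij hk by auto
    show "{i+1..j+1} \<subseteq> (!) (hd P) ` {i..j}"
    proof
      fix x assume x: "x \<in> {i+1..j+1}"
      then have "x = hd P ! (x - 1)" using ij hk by auto
      then show "x \<in> (!) (hd P) ` {i..j}" using x by force
    qed
  qed
  moreover have "length (hd P) = n" unfolding hdP by simp
  ultimately show ?thesis using ij by (intro exI[of _ "i+1"] exI[of _ "j+1"]) auto
qed

lemma common_iv2:
  assumes "common P S"
  shows "S = {Min S..Max S}" "S \<noteq> {}" "finite S" "Min S \<le> Max S" "S \<subseteq> {1..n}"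
  using common_iv[OF assms] Min_iv Max_iv by auto

lemma common_ops:
  assumes A: "common P A" and B: "common P B" and AB: "A \<inter> B \<noteq> {}"
  shows "common P (A \<inter> B)" "common P (A \<union> B)"
    "\<not> A \<subseteq> B \<Longrightarrow> \<not> B \<subseteq> A \<Longrightarrow> common P (A - B)"
proof -
  have key: "\<exists>i j. i \<le> j \<and> j < length p \<and> A \<inter> B = (!) p ` {i..j}"
    "\<exists>i j. i \<le> j \<and> j < length p \<and> A \<union> B = (!) p ` {i..j}"
    "\<not> A \<subseteq> B \<Longrightarrow> \<not> B \<subseteq> A \<Longrightarrow> \<exists>i j. i \<le> j \<and> j < length p \<and> A - B = (!) p ` {i..j}"
    if p: "p \<in> set P" for p
  proof -
    obtain i j where ij: "i \<le> j" "j < length p" "A = (!) p ` {i..j}"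
      using A p unfolding common_alt by blast
    obtain k l where kl: "k \<le> l" "l < length p" "B = (!) p ` {k..l}"
      using B p unfolding common_alt by blast
    have inj: "inj_on ((!) p) {..<length p}" using perm p by (intro inj_on_nth) auto
    have s1: "{i..j} \<subseteq> {..<length p}" "{k..l} \<subseteq> {..<length p}" using ij kl by auto
    have eI: "A \<inter> B = (!) p ` ({i..j} \<inter> {k..l})"
      using ij kl inj_on_image_Int[OF inj s1] by simp
    have eD: "A - B = (!) p ` ({i..j} - {k..l})"
      using ij kl inj_on_image_set_diff[OF inj _ s1(2)] s1(1) by auto
    have ne: "{i..j} \<inter> {k..l} \<noteq> {}" using eI AB by auto
    show "\<exists>i j. i \<le> j \<and> j < length p \<and> A \<inter> B = (!) p ` {i..j}"
      using ne ij kl eI by (intro exI[of _ "max i k"] exI[of _ "min j l"]) auto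
    have "{i..j} \<union> {k..l} = {min i k..max j l}" using ne by auto
    then show "\<exists>i j. i \<le> j \<and> j < length p \<and> A \<union> B = (!) p ` {i..j}"
      using ij kl by (intro exI[of _ "min i k"] exI[of _ "max j l"]) (auto simp: image_Un)
    assume n1: "\<not> A \<subseteq> B" and n2: "\<not> B \<subseteq> A"
    have "\<not> {i..j} \<subseteq> {k..l}" using n1 ij kl by auto
    moreover have "\<not> {k..l} \<subseteq> {i..j}" using n2 ij kl by auto
    ultimately obtain i' j' where "i \<le> i'" "i' \<le> j'" "j' \<le> j" "{i..j} - {k..l} = {i'..j'}"
      using pos_diff ne by blast
    then show "\<exists>i j. i \<le> j \<and> j < length p \<and> A - B = (!) p ` {i..j}"
      using eD ij by (intro exI[of _ i'] exI[of _ j']) auto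
  qed
  show "common P (A \<inter> B)" using key(1) AB unfolding common_alt by blast
  show "common P (A \<union> B)" using key(2) AB unfolding common_alt by blast
  assume "\<not> A \<subseteq> B" "\<not> B \<subseteq> A"
  then show "common P (A - B)" using key(3) unfolding common_alt by blast
qed

lemma common_overlap:
  assumes "common P A" "common P B"
  shows "overlap A B \<longleftrightarrow> ovl A B"
proof -
  obtain a c where "a \<le> c" "A = {a..c}" using common_iv[OF assms(1)] by blast
  moreover obtain d e where "d \<le> e" "B = {d..e}" using common_iv[OF assms(2)] by blast
  ultimately show ?thesis using ovl_overlap by simp
qed

lemma laminar:
  assumes "strong P A" "common P B" "A \<inter> B \<noteq> {}"
  shows "A \<subseteq> B \<or> B \<subseteq> A"
  using assms common_overlap[of A B] unfolding strong_def ovl_def by auto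


lemma common_sub: "common P S \<Longrightarrow> S \<subseteq> {1..n}"
  by (rule common_iv2(5))

lemma common_ne: "common P S \<Longrightarrow> S \<noteq> {}"
  unfolding common_def by blast

lemma common_fin: "common P S \<Longrightarrow> finite S"
  by (rule common_iv2(3))

lemma strong_common: "strong P S \<Longrightarrow> common P S"
  unfolding strong_def by blast

lemma root_common: "common P {1..n}"
proof -
  have "\<exists>i j. i \<le> j \<and> j < length p \<and> {1..n} = (!) p ` {i..j}" if p: "p \<in> set P" for p
  proof -
    have d: "distinct p" and sp: "set p = {1..n}" using perm p by auto
    have lp: "length p = n" using distinct_card[OF d] sp by simp
    have "(!) p ` {0..n-1} = set p" using lp n1 by (auto simp: set_conv_nth)
    then show ?thesis using lp n1 sp by (intro exI[of _ 0] exI[of _ "n-1"]) auto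
  qed
  then show ?thesis using n1 unfolding common_alt by auto
qed

lemma root_strong: "strong P {1..n}"
  unfolding strong_def using root_common common_sub common_overlap
  by (auto simp: ovl_def)

lemma single_strong:
  assumes "x \<in> {1..n}" shows "strong P {x}"
proof -
  have "\<exists>i j. i \<le> j \<and> j < length p \<and> {x} = (!) p ` {i..j}" if p: "p \<in> set P" for p
  proof -
    have "x \<in> set p" using perm p assms by auto
    then obtain i where "i < length p" "p ! i = x" by (auto simp: in_set_conv_nth)
    then show ?thesis by (intro exI[of _ i] exI[of _ i]) auto
  qed
  then have c: "common P {x}" unfolding common_alt by auto
  show ?thesis unfolding strong_def using c common_overlap[OF c] by (auto simp: ovl_def)
qed

lemma strong_in_root: "strong P S \<Longrightarrow> S \<subseteq> {1..n}"
  using common_sub strong_common by blast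

lemma children_D: "Y \<in> children P X \<Longrightarrow> strong P Y \<and> strong P X \<and> Y \<subset> X"
  unfolding children_def is_parent_def by auto

lemma children_max: "Y \<in> children P X \<Longrightarrow> strong P Z \<Longrightarrow> Y \<subset> Z \<Longrightarrow> X \<subseteq> Z"
  unfolding children_def is_parent_def by auto

lemma children_disj:
  assumes "Y1 \<in> children P X" "Y2 \<in> children P X" "Y1 \<inter> Y2 \<noteq> {}"
  shows "Y1 = Y2"
proof (rule ccontr)
  assume ne: "Y1 \<noteq> Y2"
  have "Y1 \<subseteq> Y2 \<or> Y2 \<subseteq> Y1" using laminar[of Y1 Y2] assms children_D strong_common by blast
  then show False
  proof
    assume "Y1 \<subseteq> Y2"
    then have "Y1 \<subset> Y2" using ne by auto
    then have "X \<subseteq> Y2" using children_max assms children_D by blast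
    then show False using children_D[OF assms(2)] by auto
  next
    assume "Y2 \<subseteq> Y1"
    then have "Y2 \<subset> Y1" using ne by auto
    then have "X \<subseteq> Y1" using children_max assms children_D by blast
    then show False using children_D[OF assms(1)] by auto
  qed
qed

lemma strong_fin: "finite {S. strong P S}"
proof -
  have "{S. strong P S} \<subseteq> Pow {1..n}" using strong_in_root by auto
  then show ?thesis using finite_subset by blast
qed

lemma children_fin: "finite (children P X)"
proof -
  have "children P X \<subseteq> {S. strong P S}" using children_D by auto
  then show ?thesis using strong_fin finite_subset by blast
qed

lemma child_exists:
  assumes X: "strong P X" and x: "x \<in> X" and nx: "X \<noteq> {x}"
  shows "\<exists>Y\<in>children P X. x \<in> Y"
proof -
  define S where "S = {Y. strong P Y \<and> x \<in> Y \<and> Y \<subset> X}"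
  have fS: "finite S" using strong_fin unfolding S_def by (rule rev_finite_subset) auto
  have xr: "x \<in> {1..n}" using strong_in_root[OF X] x by auto
  have "{x} \<in> S" unfolding S_def using single_strong[OF xr] x nx by auto
  then have neS: "S \<noteq> {}" by auto
  have bnd0: "card Z \<le> card {1..n}" if "Z \<in> S" for Z
    using that strong_in_root[of Z] unfolding S_def by (intro card_mono) auto
  have bnd: "\<forall>Z. Z \<in> S \<longrightarrow> card Z < Suc (card {1..n})"
    using bnd0 by (simp add: less_Suc_eq_le del: card_atLeastAtMost)
  obtain Y where Y: "Y \<in> S" "\<forall>Z\<in>S. card Z \<le> card Y"
    using Lattices_Big.ex_has_greatest_nat[of "\<lambda>Y. Y \<in> S" "{x}" card, OF \<open>{x} \<in> S\<close> bnd] by blast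
  have "is_parent P X Y"
    unfolding is_parent_def
  proof (intro conjI allI impI)
    show "strong P X" by fact
    show "strong P Y" "Y \<subset> X" using Y unfolding S_def by auto
    fix Z assume Z: "strong P Z \<and> Y \<subset> Z"
    have "Z \<inter> X \<noteq> {}" using Z Y unfolding S_def by auto
    then have "X \<subseteq> Z \<or> Z \<subseteq> X" using laminar[OF X, of Z] Z strong_common by blast
    then show "X \<subseteq> Z"
    proof
      assume "Z \<subseteq> X"
      show "X \<subseteq> Z"
      proof (rule ccontr)
        assume "\<not> X \<subseteq> Z"
        then have "Z \<in> S" using Z Y \<open>Z \<subseteq> X\<close> unfolding S_def by auto
        then have "card Z \<le> card Y" using Y by auto
        moreover have "card Y < card Z"
        proof (rule psubset_card_mono)
          show "finite Z" using Z strong_in_root[of Z] finite_subset by blast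
        qed (use Z in auto)
        ultimately show False by simp
      qed
    qed
  qed
  then show ?thesis using Y unfolding S_def children_def by auto
qed

lemma union_children:
  assumes X: "strong P X" and nx: "\<And>x. X \<noteq> {x}"
  shows "\<Union>(children P X) = X"
  using child_exists[OF X] nx children_D by blast

lemma children_single: "children P {x} = {}"
  using children_D strong_common common_ne by blast

lemma single_Pnode: "strong P {x} \<Longrightarrow> Pnode P {x}"
  unfolding Pnode_def children_single by auto

lemma Qnode_D:
  assumes "Qnode P X"
  shows "strong P X" "\<exists>D'. D' \<subset> children P X \<and> 2 \<le> card D' \<and> card D' < card (children P X)
            \<and> common P (\<Union>D')"
  using assms unfolding Qnode_def Pnode_def by auto

lemma Qnode_nonsingle:
  assumes "Qnode P X" shows "X \<noteq> {x}"
  using Qnode_D[OF assms] children_single by force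

lemma nested_common: "nested P b I \<Longrightarrow> common P I"
  by (induction rule: nested.induct) auto

end


lemma iv_facts:
  fixes a c d e :: nat
  assumes "a \<le> c" "d \<le> e"
  shows "{a..c} \<inter> {d..e} \<noteq> {} \<longleftrightarrow> d \<le> c \<and> a \<le> e"
    "{a..c} \<subseteq> {d..e} \<longleftrightarrow> d \<le> a \<and> c \<le> e"
  using assms by auto

lemma ovl_cases:
  fixes a v f g :: nat
  assumes "ovl {a..v} {f..g}" "a \<le> v" "f \<le> g"
  shows "(f < a \<and> a \<le> g \<and> g < v) \<or> (a < f \<and> f \<le> v \<and> v < g)"
proof -
  have h: "f \<le> v" "a \<le> g" "\<not>(f \<le> a \<and> v \<le> g)" "\<not>(a \<le> f \<and> g \<le> v)"
    using assms(1) unfolding ovl_def iv_facts[OF assms(2,3)] iv_facts[OF assms(3,2)] by auto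
  then show ?thesis by linarith
qed

locale qn = perms +
  fixes X assumes QX: "Qnode P X"
begin

definition c :: "nat \<Rightarrow> nat set" where "c x = (SOME Y. Y \<in> children P X \<and> x \<in> Y)"
definition lo :: "nat \<Rightarrow> nat" where "lo x = Min (c x)"
definition hi :: "nat \<Rightarrow> nat" where "hi x = Max (c x)"
definition tw :: "nat set \<Rightarrow> bool" where "tw C \<longleftrightarrow> (\<exists>x\<in>C. \<exists>y\<in>C. c x \<noteq> c y)"
definition bd :: "nat \<Rightarrow> bool" where "bd t \<longleftrightarrow> t \<in> X \<and> Suc t \<in> X \<and> c t \<noteq> c (Suc t)"
definition pr :: "nat \<Rightarrow> nat set" where "pr t = {lo t..hi (Suc t)}"

lemma X_strong: "strong P X" using Qnode_D[OF QX] by blast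
lemma X_common: "common P X" using X_strong strong_common by blast
lemma X_iv: "X = {Min X..Max X}" using common_iv2(1)[OF X_common] .

lemma iv_subX: assumes "u \<in> X" "v \<in> X" shows "{u..v} \<subseteq> X"
proof -
  obtain f g where "X = {f..g}" using common_iv[OF X_common] by blast
  then show ?thesis using assms by auto
qed

lemma c_in: assumes "x \<in> X" shows "c x \<in> children P X \<and> x \<in> c x"
proof -
  have "\<exists>Y. Y \<in> children P X \<and> x \<in> Y"
    using child_exists[OF X_strong assms Qnode_nonsingle[OF QX]] by blast
  then show ?thesis unfolding c_def by (rule someI_ex)
qed

lemma c_strong: "x \<in> X \<Longrightarrow> strong P (c x)" using c_in children_D by blast
lemma c_common: "x \<in> X \<Longrightarrow> common P (c x)" using c_strong strong_common by blast
lemma c_sub: "x \<in> X \<Longrightarrow> c x \<subset> X" using c_in children_D by blast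

lemma c_eq: assumes "x \<in> X" "y \<in> c x" shows "c y = c x"
proof -
  have y: "y \<in> X" using c_sub assms by blast
  show ?thesis using children_disj[of "c y" X "c x"] c_in[OF y] c_in[OF assms(1)] assms by blast
qed

lemma c_iv: assumes "x \<in> X" shows "c x = {lo x..hi x}" "lo x \<le> x" "x \<le> hi x"
proof -
  have "c x = {Min (c x)..Max (c x)}" using common_iv2(1)[OF c_common[OF assms]] .
  then show "c x = {lo x..hi x}" unfolding lo_def hi_def .
  then show "lo x \<le> x" "x \<le> hi x" using c_in[OF assms] by auto
qed

lemma c_mem: "x \<in> X \<Longrightarrow> y \<in> X \<Longrightarrow> y \<in> c x \<longleftrightarrow> lo x \<le> y \<and> y \<le> hi x"
  using c_iv by auto

lemma c_same: "x \<in> X \<Longrightarrow> y \<in> X \<Longrightarrow> lo x \<le> y \<Longrightarrow> y \<le> hi x \<Longrightarrow> c y = c x"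
  using c_eq c_mem by blast

lemma lo_hi_X: "x \<in> X \<Longrightarrow> lo x \<in> X \<and> hi x \<in> X \<and> c (lo x) = c x \<and> c (hi x) = c x"
proof -
  assume x: "x \<in> X"
  have "lo x \<in> c x" "hi x \<in> c x" using c_iv[OF x] by auto
  then show ?thesis using c_eq[OF x] c_sub[OF x] by blast
qed

lemma lo_lo: "x \<in> X \<Longrightarrow> lo (lo x) = lo x" using lo_hi_X unfolding lo_def by simp
lemma hi_hi: "x \<in> X \<Longrightarrow> hi (hi x) = hi x" using lo_hi_X unfolding hi_def by simp

lemma closed:
  assumes C: "common P C" "C \<subseteq> X" "tw C" and z: "z \<in> C"
  shows "c z \<subseteq> C"
proof -
  obtain x y where xy: "x \<in> C" "y \<in> C" "c x \<noteq> c y" using C(3) unfolding tw_def by blast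
  have zX: "z \<in> X" using z C by blast
  have "c z \<subseteq> C \<or> C \<subseteq> c z" using laminar[OF c_strong[OF zX] C(1)] z c_in[OF zX] by blast
  moreover have "\<not> C \<subseteq> c z"
  proof
    assume "C \<subseteq> c z"
    then have "c x = c z" "c y = c z" using c_eq[OF zX] xy by auto
    then show False using xy by simp
  qed
  ultimately show ?thesis by blast
qed

lemma closed_iv:
  assumes C: "common P {a..v}" "{a..v} \<subseteq> X" "tw {a..v}" and z: "a \<le> z" "z \<le> v"
  shows "a \<le> lo z" "hi z \<le> v"
proof -
  have zX: "z \<in> X" using C z by auto
  have "c z \<subseteq> {a..v}" using closed[OF C] z by auto
  then show "a \<le> lo z" "hi z \<le> v" using c_iv[OF zX] by auto
qed

lemma notstrong:
  assumes C: "common P C" "C \<subseteq> X" "C \<noteq> X" "tw C"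
  shows "\<exists>F. common P F \<and> ovl C F \<and> F \<subseteq> X \<and> tw F"
proof -
  obtain x y where xy: "x \<in> C" "y \<in> C" "c x \<noteq> c y" using C(4) unfolding tw_def by blast
  have xX: "x \<in> X" using xy C by blast
  have "\<not> strong P C"
  proof
    assume sC: "strong P C"
    have "c x \<subseteq> C" using closed[OF C(1,2,4) xy(1)] .
    moreover have "y \<notin> c x" using c_eq[OF xX] xy by metis
    ultimately have "c x \<subset> C" using xy by blast
    then have "X \<subseteq> C" using children_max c_in[OF xX] sC by blast
    then show False using C by blast
  qed
  then obtain F where F: "common P F" "overlap C F" using C(1) unfolding strong_def by blast
  then have o: "ovl C F" using common_overlap C(1) by blast
  have "X \<subseteq> F \<or> F \<subseteq> X" using laminar[OF X_strong F(1)] o C(2) unfolding ovl_def by blast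
  then have FX: "F \<subseteq> X" using o C(2) unfolding ovl_def by blast
  obtain w w' where w: "w \<in> F" "w \<in> C" "w' \<in> F" "w' \<notin> C" using o unfolding ovl_def by blast
  have "c w \<subseteq> C" using closed[OF C(1,2,4) w(2)] .
  moreover have "w' \<in> c w'" using c_in FX w by blast
  ultimately have "c w \<noteq> c w'" using w by blast
  then have "tw F" unfolding tw_def using w by blast
  then show ?thesis using F(1) o FX by blast
qed

lemma common_ivE:
  assumes "common P F"
  obtains f g where "F = {f..g}" "f \<le> g"
  using common_iv[OF assms] by blast

lemma bd_facts:
  assumes "bd t" shows "hi t = t" "lo (Suc t) = Suc t" "c t = {lo t..t}" "c (Suc t) = {Suc t..hi (Suc t)}"
    "lo t \<le> t" "Suc t \<le> hi (Suc t)"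
proof -
  have t: "t \<in> X" "Suc t \<in> X" "c t \<noteq> c (Suc t)" using assms unfolding bd_def by auto
  show h: "hi t = t"
  proof (rule ccontr)
    assume "hi t \<noteq> t"
    then have "Suc t \<in> c t" using c_iv[OF t(1)] by auto
    then show False using c_eq[OF t(1)] t by metis
  qed
  show l: "lo (Suc t) = Suc t"
  proof (rule ccontr)
    assume "lo (Suc t) \<noteq> Suc t"
    then have "t \<in> c (Suc t)" using c_iv[OF t(2)] by auto
    then show False using c_eq[OF t(2)] t by metis
  qed
  show "c t = {lo t..t}" "c (Suc t) = {Suc t..hi (Suc t)}" using c_iv t h l by auto
  show "lo t \<le> t" "Suc t \<le> hi (Suc t)" using c_iv t by auto
qed

lemma ovlD: "ovl A B \<Longrightarrow> A \<inter> B \<noteq> {} \<and> \<not> A \<subseteq> B \<and> \<not> B \<subseteq> A" unfolding ovl_def by blast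


lemma pairR:
  assumes bt: "bd t"
  shows "Suc t \<le> v \<Longrightarrow> common P {lo t..v} \<Longrightarrow> {lo t..v} \<subseteq> X \<Longrightarrow> {lo t..v} \<noteq> X
    \<Longrightarrow> common P (pr t)"
proof (induction v rule: less_induct)
  case (less v)
  define a where "a = lo t"
  note bf = bd_facts[OF bt]
  have tX: "t \<in> X" "Suc t \<in> X" and ct: "c t \<noteq> c (Suc t)" using bt unfolding bd_def by auto
  have C: "common P {a..v}" "{a..v} \<subseteq> X" "{a..v} \<noteq> X" using less.prems a_def by auto
  have at: "a \<le> t" using bf a_def by simp
  have av: "a \<le> v" using at less.prems(1) by simp
  have vX: "v \<in> X" using C(2) av by auto
  have "t \<in> {a..v}" "Suc t \<in> {a..v}" using at less.prems(1) by auto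
  then have twC: "tw {a..v}" unfolding tw_def using ct by blast
  have IH: "common P (pr t)" if "v' < v" "Suc t \<le> v'" "common P {a..v'}" for v'
  proof -
    have "{a..v'} \<subseteq> X" using C(2) that(1) by auto
    moreover have "{a..v'} \<noteq> X" using vX that(1) by auto
    ultimately show ?thesis using less.IH[OF that(1,2)] that(3) a_def by simp
  qed
  define m where "m = hi (Suc t)"
  have mv: "m \<le> v" using closed_iv(2)[OF C(1,2) twC, of "Suc t"] less.prems(1) at m_def by auto
  show ?case
  proof (cases "m = v")
    case True then show ?thesis unfolding pr_def using C(1) a_def m_def by simp
  next
    case False
    then have mv': "m < v" using mv by simp
    have E: "common P {Suc t..v} \<or> common P (pr t)"
    proof -
      obtain F where F: "common P F" "ovl {a..v} F" "F \<subseteq> X" "tw F" using notstrong[OF C twC] by blast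
      obtain f g where fg: "F = {f..g}" "f \<le> g" using common_ivE[OF F(1)] by blast
      have clF: "f \<le> lo z \<and> hi z \<le> g" if "f \<le> z" "z \<le> g" for z
        using closed_iv[of f g z] F fg that by auto
      have oD: "{a..v} \<inter> F \<noteq> {}" "\<not> {a..v} \<subseteq> F" "\<not> F \<subseteq> {a..v}" using ovlD[OF F(2)] by auto
      from ovl_cases[OF F(2)[unfolded fg] av fg(2)]
      show ?thesis
      proof
        assume h: "f < a \<and> a \<le> g \<and> g < v"
        have "{a..v} \<inter> F = {a..g}" using h fg by auto
        then have I: "common P {a..g}" using common_ops(1)[OF C(1) F(1) oD(1)] by simp
        show ?thesis
        proof (cases "Suc t \<le> g")
          case True then show ?thesis using IH[of g] h I by simp
        next
          case False
          have gX: "g \<in> X" using F(3) fg by auto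
          have "c g = c t" using c_same[OF tX(1) gX] h False bf a_def by simp
          then have "hi g = t" using bf unfolding hi_def by simp
          moreover have "hi g \<le> g" using clF[of g] fg by simp
          ultimately have "g = t" using False by simp
          then have "{a..v} - F = {Suc t..v}" using h fg by auto
          then show ?thesis using common_ops(3)[OF C(1) F(1) oD] by simp
        qed
      next
        assume h: "a < f \<and> f \<le> v \<and> v < g"
        have fX: "f \<in> X" using F(3) fg by auto
        have sf: "Suc t \<le> f"
        proof (rule ccontr)
          assume "\<not> Suc t \<le> f"
          then have "c f = c t" using c_same[OF tX(1) fX] h bf a_def by simp
          then have "lo f = a" using a_def unfolding lo_def by simp
          moreover have "f \<le> lo f" using clF[of f] fg by simp
          ultimately show False using h by simp
        qed
        have "{a..v} - F = {a..f-1}" using h fg by auto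
        then have D: "common P {a..f-1}" using common_ops(3)[OF C(1) F(1) oD] by simp
        show ?thesis
        proof (cases "Suc t \<le> f - 1")
          case True
          have "f - 1 < v" using h by linarith
          then show ?thesis using IH[of "f-1"] True D by simp
        next
          case False
          then have "f = Suc t" using sf by simp
          then have "{a..v} \<inter> F = {Suc t..v}" using h fg by auto
          then show ?thesis using common_ops(1)[OF C(1) F(1) oD(1)] by simp
        qed
      qed
    qed
    then show ?thesis
    proof
      assume E: "common P {Suc t..v}"
      have EX: "{Suc t..v} \<subseteq> X" using C(2) at by auto
      have EnX: "{Suc t..v} \<noteq> X" using tX(1) by auto
      have "v \<notin> c (Suc t)" using bf mv' m_def by auto
      then have "c v \<noteq> c (Suc t)" using c_in[OF vX] by auto
      moreover have "v \<in> {Suc t..v}" "Suc t \<in> {Suc t..v}" using less.prems(1) by auto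
      ultimately have twE: "tw {Suc t..v}" unfolding tw_def by blast
      obtain F where F: "common P F" "ovl {Suc t..v} F" "F \<subseteq> X" "tw F"
        using notstrong[OF E EX EnX twE] by blast
      obtain f g where fg: "F = {f..g}" "f \<le> g" using common_ivE[OF F(1)] by blast
      have clF: "f \<le> lo z \<and> hi z \<le> g" if "f \<le> z" "z \<le> g" for z
        using closed_iv[of f g z] F fg that by auto
      from ovl_cases[OF F(2)[unfolded fg] less.prems(1) fg(2)]
      show ?thesis
      proof
        assume h: "f < Suc t \<and> Suc t \<le> g \<and> g < v"
        have "f \<le> a" using clF[of t] h a_def by simp
        then have "{a..v} \<inter> F = {a..g}" using h fg by auto
        moreover have "{a..v} \<inter> F \<noteq> {}" using h fg at \<open>f \<le> a\<close> by auto
        ultimately have "common P {a..g}" using common_ops(1)[OF C(1) F(1)] by simp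
        then show ?thesis using IH[of g] h by simp
      next
        assume h: "Suc t < f \<and> f \<le> v \<and> v < g"
        have o1: "{a..v} \<inter> F \<noteq> {}" "\<not> {a..v} \<subseteq> F" "\<not> F \<subseteq> {a..v}"
          using h fg at by auto
        have "{a..v} - F = {a..f-1}" using h fg by auto
        then have "common P {a..f-1}" using common_ops(3)[OF C(1) F(1) o1] by simp
        moreover have "f - 1 < v" "Suc t \<le> f - 1" using h by linarith+
        ultimately show ?thesis using IH[of "f-1"] by simp
      qed
    qed simp
  qed
qed

lemma pairL:
  assumes bt: "bd t"
  shows "u \<le> t \<Longrightarrow> common P {u..hi (Suc t)} \<Longrightarrow> {u..hi (Suc t)} \<subseteq> X \<Longrightarrow> {u..hi (Suc t)} \<noteq> X
    \<Longrightarrow> common P (pr t)"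
proof (induction "t - u" arbitrary: u rule: less_induct)
  case less
  define b where "b = hi (Suc t)"
  define l where "l = lo t"
  note bf = bd_facts[OF bt]
  have tX: "t \<in> X" "Suc t \<in> X" and ct: "c t \<noteq> c (Suc t)" using bt unfolding bd_def by auto
  have C: "common P {u..b}" "{u..b} \<subseteq> X" "{u..b} \<noteq> X" using less.prems b_def by auto
  have tb: "Suc t \<le> b" using bf b_def by simp
  have ub: "u \<le> b" using tb less.prems(1) by simp
  have uX: "u \<in> X" using C(2) ub by auto
  have "t \<in> {u..b}" "Suc t \<in> {u..b}" using tb less.prems(1) by auto
  then have twC: "tw {u..b}" unfolding tw_def using ct by blast
  have IH: "common P (pr t)" if "u < u'" "u' \<le> t" "common P {u'..b}" for u'
  proof -
    have "{u'..b} \<subseteq> X" using C(2) that(1) by auto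
    moreover have "{u'..b} \<noteq> X" using uX that(1) by auto
    moreover have "t - u' < t - u" using that less.prems(1) by simp
    ultimately show ?thesis using less(1)[of u'] that b_def by simp
  qed
  have ul: "u \<le> l" using closed_iv(1)[OF C(1,2) twC, of t] less.prems(1) tb l_def by simp
  show ?case
  proof (cases "u = l")
    case True then show ?thesis unfolding pr_def using C(1) l_def b_def by simp
  next
    case False
    then have ul': "u < l" using ul by simp
    have E: "common P {u..t} \<or> common P (pr t)"
    proof -
      obtain F where F: "common P F" "ovl {u..b} F" "F \<subseteq> X" "tw F" using notstrong[OF C twC] by blast
      obtain f g where fg: "F = {f..g}" "f \<le> g" using common_ivE[OF F(1)] by blast
      have clF: "f \<le> lo z \<and> hi z \<le> g" if "f \<le> z" "z \<le> g" for z
        using closed_iv[of f g z] F fg that by auto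
      have oD: "{u..b} \<inter> F \<noteq> {}" "\<not> {u..b} \<subseteq> F" "\<not> F \<subseteq> {u..b}" using ovlD[OF F(2)] by auto
      from ovl_cases[OF F(2)[unfolded fg] ub fg(2)]
      show ?thesis
      proof
        assume h: "f < u \<and> u \<le> g \<and> g < b"
        have gX: "g \<in> X" using F(3) fg by auto
        have gt: "g \<le> t"
        proof (rule ccontr)
          assume "\<not> g \<le> t"
          then have "c g = c (Suc t)" using c_same[OF tX(2) gX] h bf b_def by simp
          then have "hi g = b" using b_def unfolding hi_def by simp
          moreover have "hi g \<le> g" using clF[of g] fg by simp
          ultimately show False using h by simp
        qed
        have "{u..b} - F = {g+1..b}" using h fg by auto
        then have D: "common P {g+1..b}" using common_ops(3)[OF C(1) F(1) oD] by simp
        show ?thesis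
        proof (cases "g + 1 \<le> t")
          case True then show ?thesis using IH[of "g+1"] h D by simp
        next
          case False
          then have "g = t" using gt by simp
          then have "{u..b} \<inter> F = {u..t}" using h fg tb by auto
          then show ?thesis using common_ops(1)[OF C(1) F(1) oD(1)] by simp
        qed
      next
        assume h: "u < f \<and> f \<le> b \<and> b < g"
        have fX: "f \<in> X" using F(3) fg by auto
        show ?thesis
        proof (cases "f \<le> t")
          case True
          have "{u..b} \<inter> F = {f..b}" using h fg by auto
          then have "common P {f..b}" using common_ops(1)[OF C(1) F(1) oD(1)] by simp
          then show ?thesis using IH[of f] h True by simp
        next
          case False
          then have "c f = c (Suc t)" using c_same[OF tX(2) fX] h bf b_def by simp
          then have "lo f = Suc t" using bf unfolding lo_def by simp
          moreover have "f \<le> lo f" using clF[of f] fg by simp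
          ultimately have "f = Suc t" using False by simp
          then have "{u..b} - F = {u..t}" using h fg by auto
          then show ?thesis using common_ops(3)[OF C(1) F(1) oD] by simp
        qed
      qed
    qed
    then show ?thesis
    proof
      assume E: "common P {u..t}"
      have EX: "{u..t} \<subseteq> X" using C(2) tb by auto
      have EnX: "{u..t} \<noteq> X" using tX(2) by auto
      have "u \<notin> c t" using bf ul' l_def by auto
      then have "c u \<noteq> c t" using c_in[OF uX] by auto
      moreover have "u \<in> {u..t}" "t \<in> {u..t}" using less.prems(1) by auto
      ultimately have twE: "tw {u..t}" unfolding tw_def by blast
      obtain F where F: "common P F" "ovl {u..t} F" "F \<subseteq> X" "tw F"
        using notstrong[OF E EX EnX twE] by blast
      obtain f g where fg: "F = {f..g}" "f \<le> g" using common_ivE[OF F(1)] by blast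
      have clF: "f \<le> lo z \<and> hi z \<le> g" if "f \<le> z" "z \<le> g" for z
        using closed_iv[of f g z] F fg that by auto
      from ovl_cases[OF F(2)[unfolded fg] less.prems(1) fg(2)]
      show ?thesis
      proof
        assume h: "f < u \<and> u \<le> g \<and> g < t"
        have o1: "{u..b} \<inter> F \<noteq> {}" "\<not> {u..b} \<subseteq> F" "\<not> F \<subseteq> {u..b}"
          using h fg tb by auto
        have "{u..b} - F = {g+1..b}" using h fg by auto
        then have "common P {g+1..b}" using common_ops(3)[OF C(1) F(1) o1] by simp
        then show ?thesis using IH[of "g+1"] h by simp
      next
        assume h: "u < f \<and> f \<le> t \<and> t < g"
        have "b \<le> g" using clF[of "Suc t"] h b_def by simp
        then have "{u..b} \<inter> F = {f..b}" using h fg by auto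
        moreover have "{u..b} \<inter> F \<noteq> {}" using h fg tb \<open>b \<le> g\<close> by auto
        ultimately have "common P {f..b}" using common_ops(1)[OF C(1) F(1)] by simp
        then show ?thesis using IH[of f] h by simp
      qed
    qed simp
  qed
qed

lemma not_bd_within:
  assumes "x \<in> X" "lo x \<le> s" "Suc s \<le> hi x" shows "\<not> bd s"
proof -
  have sX: "s \<in> X" "Suc s \<in> X" using assms lo_hi_X iv_subX[of "lo x" "hi x"] by auto
  have "c s = c x" "c (Suc s) = c x" using c_same[OF assms(1)] sX assms by auto
  then show ?thesis unfolding bd_def by simp
qed

lemma runs:
  assumes good: "\<forall>s. bd s \<and> u \<le> s \<and> s < v \<longrightarrow> common P (pr s)"
  shows "u \<in> X \<Longrightarrow> v \<in> X \<Longrightarrow> lo u = u \<Longrightarrow> hi v = v \<Longrightarrow> u \<le> v \<Longrightarrow> common P {u..v}"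
  using good
proof (induction v rule: less_induct)
  case (less v)
  have uX: "u \<in> X" and vX: "v \<in> X" using less.prems by auto
  show ?case
  proof (cases "v \<in> c u")
    case True
    then have "c v = c u" using c_eq uX by blast
    then have "hi u = v" using less.prems(4) unfolding hi_def by simp
    then have "{u..v} = c u" using c_iv(1)[OF uX] less.prems(3) by simp
    then show ?thesis using c_common[OF uX] by simp
  next
    case False
    define w where "w = lo v - 1"
    have lvv: "lo v \<le> v" using c_iv[OF vX] by simp
    have lv: "u < lo v"
    proof (rule ccontr)
      assume "\<not> u < lo v"
      then have "c u = c v" using c_same[OF vX uX] less.prems by simp
      then show False using False c_in[OF vX] by simp
    qed
    have "w \<in> {u..v}" using lv lvv w_def by auto
    then have wX: "w \<in> X" using iv_subX[OF uX vX] by blast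
    have lvX: "lo v \<in> X" "c (lo v) = c v" using lo_hi_X[OF vX] by auto
    have Sw: "Suc w = lo v" using lv w_def by simp
    have "w \<notin> c v" using c_iv[OF vX] w_def lv by auto
    then have "c w \<noteq> c (Suc w)" using Sw lvX c_in[OF wX] by auto
    then have bw: "bd w" unfolding bd_def using wX Sw lvX by simp
    have hiw: "hi w = w" using bd_facts(1)[OF bw] .
    have uw: "u \<le> w" "w < v" using lv lvv w_def by auto
    have I1: "common P {u..w}"
      using less.IH[OF uw(2) uX wX less.prems(3) hiw uw(1)] less.prems(6) uw by auto
    have "hi (Suc w) = v" using Sw lvX less.prems(4) unfolding hi_def by simp
    then have I2: "common P {lo w..v}" using less.prems(6) bw uw unfolding pr_def by auto
    have luw: "u \<le> lo w"
    proof (rule ccontr)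
      assume "\<not> u \<le> lo w"
      then have "c u = c w" using c_same[OF wX uX] uw hiw by simp
      then have "lo u = lo w" unfolding lo_def by simp
      then show False using \<open>\<not> u \<le> lo w\<close> less.prems(3) by simp
    qed
    have lww: "lo w \<le> w" using c_iv[OF wX] by simp
    have "{u..w} \<inter> {lo w..v} \<noteq> {}" using lww uw by auto
    moreover have "{u..w} \<union> {lo w..v} = {u..v}" using luw lww uw by auto
    ultimately show ?thesis using common_ops(2)[OF I1 I2] by simp
  qed
qed

lemma some_pair: "\<exists>t. bd t \<and> common P (pr t)"
proof -
  obtain D where D: "D \<subset> children P X" "2 \<le> card D" "common P (\<Union>D)" using Qnode_D(2)[OF QX] by blast
  have fD: "finite D" using D(1) children_fin finite_subset by blast
  obtain Y1 Y2 where Y: "Y1 \<in> D" "Y2 \<in> D" "Y1 \<noteq> Y2"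
    using D(2) card_le_Suc0_iff_eq[OF fD] by (metis One_nat_def not_less_eq_eq numeral_2_eq_2)
  have ch: "Y1 \<in> children P X" "Y2 \<in> children P X" using Y D(1) by auto
  obtain x1 x2 where x: "x1 \<in> Y1" "x2 \<in> Y2"
    using ch children_D strong_common common_ne by (metis ex_in_conv)
  have xX: "x1 \<in> X" "x2 \<in> X" using x ch children_D by blast+
  have "c x1 = Y1" using children_disj[of "c x1" X Y1] c_in[OF xX(1)] ch x by blast
  moreover have "c x2 = Y2" using children_disj[of "c x2" X Y2] c_in[OF xX(2)] ch x by blast
  ultimately have tw: "tw (\<Union>D)" unfolding tw_def using Y x by blast
  have SX: "\<Union>D \<subseteq> X" using D(1) children_D by blast
  obtain Y where Yc: "Y \<in> children P X" "Y \<notin> D" using D(1) by blast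
  obtain y where y: "y \<in> Y" using Yc children_D strong_common common_ne by (metis ex_in_conv)
  have SnX: "\<Union>D \<noteq> X"
  proof
    assume "\<Union>D = X"
    then obtain Y' where "Y' \<in> D" "y \<in> Y'" using y Yc children_D by blast
    then have "Y' = Y" using children_disj[of Y' X Y] D(1) Yc y by blast
    then show False using \<open>Y' \<in> D\<close> Yc by simp
  qed
  obtain u v where uv: "\<Union>D = {u..v}" "u \<le> v" using common_ivE[OF D(3)] by blast
  note C = D(3)[unfolded uv] SX[unfolded uv] SnX[unfolded uv] tw[unfolded uv]
  have uX: "u \<in> X" using C(2) uv by auto
  have luu: "lo u = u" using closed_iv(1)[OF C(1,2,4), of u] uv(2) c_iv(2)[OF uX] by simp
  define t where "t = hi u"
  have tv: "t \<le> v" using closed_iv(2)[OF C(1,2,4), of u] uv(2) t_def by simp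
  have tv': "t < v"
  proof (rule ccontr)
    assume "\<not> t < v"
    then have "{u..v} = c u" using tv c_iv(1)[OF uX] luu t_def by simp
    then have "\<forall>z\<in>{u..v}. c z = c u" using c_eq[OF uX] by blast
    then show False using C(4) unfolding tw_def by metis
  qed
  have tX: "t \<in> X" "Suc t \<in> X" using C(2) tv' t_def c_iv[OF uX] luu by auto
  have "c t = c u" using lo_hi_X[OF uX] t_def by simp
  moreover have "Suc t \<notin> c u" using c_iv[OF uX] t_def by simp
  ultimately have ct: "c t \<noteq> c (Suc t)" using c_in[OF tX(2)] by auto
  then have bt: "bd t" unfolding bd_def using tX by simp
  have "lo t = u" using \<open>c t = c u\<close> luu unfolding lo_def by simp
  then have "common P (pr t)" using pairR[OF bt, of v] tv' C by simp
  then show ?thesis using bt by blast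
qed

definition good :: "nat \<times> nat \<Rightarrow> bool" where
  "good p \<longleftrightarrow> (case p of (u, v) \<Rightarrow> u \<in> X \<and> v \<in> X \<and> lo u = u \<and> hi v = v \<and> u < v \<and> c u \<noteq> c v
     \<and> (\<forall>s. bd s \<and> u \<le> s \<and> s < v \<longrightarrow> common P (pr s)))"

lemma allpairs: assumes bt: "bd t" shows "common P (pr t)"
proof (rule ccontr)
  assume nc: "\<not> common P (pr t)"
  obtain t0 where t0: "bd t0" "common P (pr t0)" using some_pair by blast
  note b0 = bd_facts[OF t0(1)]
  have t0X: "t0 \<in> X" "Suc t0 \<in> X" "c t0 \<noteq> c (Suc t0)" using t0(1) unfolding bd_def by auto
  have g0: "good (lo t0, hi (Suc t0))"
    unfolding good_def
  proof (simp only: prod.case, intro conjI allI impI)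
    show "lo t0 \<in> X" "hi (Suc t0) \<in> X" using lo_hi_X t0X by auto
    show "lo (lo t0) = lo t0" "hi (hi (Suc t0)) = hi (Suc t0)" using lo_lo hi_hi t0X by auto
    show "lo t0 < hi (Suc t0)" using b0 by simp
    show "c (lo t0) \<noteq> c (hi (Suc t0))" using lo_hi_X t0X by simp
    fix s assume s: "bd s \<and> lo t0 \<le> s \<and> s < hi (Suc t0)"
    show "common P (pr s)"
    proof (cases "s = t0")
      case True then show ?thesis using t0 by simp
    next
      case False
      show ?thesis
      proof (cases "s < t0")
        case True
        then have "\<not> bd s" using not_bd_within[OF t0X(1), of s] s b0 by simp
        then show ?thesis using s by simp
      next
        case False
        then have "\<not> bd s" using not_bd_within[OF t0X(2), of s] s b0 \<open>s \<noteq> t0\<close> by simp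
        then show ?thesis using s by simp
      qed
    qed
  qed
  have finX: "finite X" using common_fin[OF X_common] .
  have bnd: "\<forall>p. good p \<longrightarrow> (\<lambda>(u,v). v - u) p < Suc (Max X)"
    unfolding good_def using Max_ge[OF finX] by fastforce
  obtain u v where uvg: "good (u, v)" and mx: "\<And>p. good p \<Longrightarrow> (\<lambda>(u,v). v - u) p \<le> v - u"
    using Lattices_Big.ex_has_greatest_nat[of good _ "\<lambda>(u,v). v - u", OF g0 bnd] by fastforce
  have G: "u \<in> X" "v \<in> X" "lo u = u" "hi v = v" "u < v" "c u \<noteq> c v"
    "\<And>s. bd s \<Longrightarrow> u \<le> s \<Longrightarrow> s < v \<Longrightarrow> common P (pr s)"
    using uvg unfolding good_def by auto
  have RX: "{u..v} \<subseteq> X" using iv_subX G by blast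
  have tX: "t \<in> X" "Suc t \<in> X" using bt unfolding bd_def by auto
  have RnX: "{u..v} \<noteq> X"
  proof
    assume "{u..v} = X"
    then have "u \<le> t" "t < v" using tX by auto
    then show False using G(7)[OF bt] nc by simp
  qed
  have R: "common P {u..v}" using runs[of u v] G by auto
  have "u \<in> {u..v}" "v \<in> {u..v}" using G by auto
  then have twR: "tw {u..v}" unfolding tw_def using G(6) by blast
  note clR = closed_iv[OF R RX twR]
  obtain F where F: "common P F" "ovl {u..v} F" "F \<subseteq> X" "tw F" using notstrong[OF R RX RnX twR] by blast
  obtain f g where fg: "F = {f..g}" "f \<le> g" using common_ivE[OF F(1)] by blast
  have clF: "f \<le> lo z \<and> hi z \<le> g" if "f \<le> z" "z \<le> g" for z
    using closed_iv[of f g z] F fg that by auto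
  have fX: "f \<in> X" and gX: "g \<in> X" using F(3) fg by auto
  have uv: "u \<le> v" using G by simp
  have luv: "u < lo v"
  proof (rule ccontr)
    assume "\<not> u < lo v"
    then have "lo v \<le> u" by simp
    then have "c u = c v" using c_same[OF G(2,1)] G by simp
    then show False using G by simp
  qed
  have huv: "hi u < v"
  proof (rule ccontr)
    assume "\<not> hi u < v"
    then have "v \<le> hi u" by simp
    then have "c v = c u" using c_same[OF G(1,2)] G by simp
    then show False using G by simp
  qed
  from ovl_cases[OF F(2)[unfolded fg] uv fg(2)]
  show False
  proof
    assume h: "u < f \<and> f \<le> v \<and> v < g"
    define a' where "a' = lo v"
    have lff: "lo f = f" using clF[of f] c_iv(2)[OF fX] fg by simp
    have fa: "f \<le> a'"
    proof (rule ccontr)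
      assume "\<not> f \<le> a'"
      then have "c f = c v" using c_same[OF G(2) fX] h G a'_def by simp
      then have "lo f = a'" using a'_def unfolding lo_def by simp
      then show False using lff \<open>\<not> f \<le> a'\<close> by simp
    qed
    have A: "common P {a'..g}"
    proof (cases "f = a'")
      case True then show ?thesis using F(1) fg by simp
    next
      case False
      then have fa': "f < a'" using fa by simp
      define w where "w = f - 1"
      have Sw: "Suc w = f" using h w_def by simp
      have "w \<in> {u..v}" using h w_def by auto
      then have wX: "w \<in> X" using RX by blast
      have "w \<notin> c f" using c_iv[OF fX] lff Sw by auto
      then have "c w \<noteq> c (Suc w)" using Sw c_in[OF wX] by auto
      then have bw: "bd w" unfolding bd_def using wX Sw fX by simp
      define z where "z = a' - 1"
      have Sz: "Suc z = a'" using luv a'_def z_def by simp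
      have "z \<in> {u..v}" using luv a'_def z_def c_iv[OF G(2)] by auto
      then have zX: "z \<in> X" using RX by blast
      have aX: "a' \<in> X" "c a' = c v" using lo_hi_X[OF G(2)] a'_def by auto
      have "z \<notin> c v" using c_iv[OF G(2)] Sz a'_def by auto
      then have "c z \<noteq> c (Suc z)" using Sz aX c_in[OF zX] by auto
      then have bz: "bd z" unfolding bd_def using zX Sz aX by simp
      have hz: "hi z = z" using bd_facts(1)[OF bz] .
      have "u \<le> w" "w \<le> v" using h Sw by auto
      then have lw: "u \<le> lo w" using clR(1) by blast
      have lww: "lo w \<le> w" using c_iv[OF wX] by simp
      have lwX: "lo w \<in> X" using lo_hi_X[OF wX] by simp
      have zv: "z < v" using Sz a'_def c_iv(2)[OF G(2)] by linarith
      have gd: "\<forall>s. bd s \<and> lo w \<le> s \<and> s < z \<longrightarrow> common P (pr s)"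
      proof (intro allI impI)
        fix s assume s: "bd s \<and> lo w \<le> s \<and> s < z"
        then have "u \<le> s" "s < v" using lw zv by linarith+
        then show "common P (pr s)" using G(7) s by blast
      qed
      have "lo w \<le> z" using lww Sw Sz fa' by linarith
      then have B: "common P {lo w..z}"
        using runs[OF gd lwX zX lo_lo[OF wX] hz] by blast
      have o1: "{lo w..z} \<inter> F \<noteq> {}" "\<not> {lo w..z} \<subseteq> F" "\<not> F \<subseteq> {lo w..z}"
        using fg h Sw Sz fa' lww zv by auto
      have "F - {lo w..z} = {a'..g}" using fg Sw Sz lww fa' zv h by auto
      then show ?thesis using common_ops(3)[OF F(1) B] o1 by (simp add: Int_commute)
    qed
    have vX: "v \<in> X" using G by simp
    have "Suc v \<in> {f..g}" using h by auto
    then have SvX: "Suc v \<in> X" using iv_subX[OF fX gX] by blast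
    have "Suc v \<notin> c v" using c_iv[OF vX] G by simp
    then have bv: "bd v" unfolding bd_def using vX SvX c_in[OF SvX] by auto
    have aX: "a' \<in> X" using lo_hi_X[OF vX] a'_def by simp
    have "{a'..g} \<subseteq> X" using iv_subX[OF aX gX] .
    moreover have "u \<notin> {a'..g}" using luv a'_def by auto
    then have "{a'..g} \<noteq> X" using G(1) by blast
    ultimately have pv: "common P (pr v)" using pairR[OF bv, of g] A h a'_def by simp
    note bf = bd_facts[OF bv]
    have "good (u, hi (Suc v))"
      unfolding good_def
    proof (simp only: prod.case, intro conjI allI impI)
      show "u \<in> X" "lo u = u" using G by auto
      show "hi (Suc v) \<in> X" using lo_hi_X[OF SvX] by simp
      show "hi (hi (Suc v)) = hi (Suc v)" using hi_hi[OF SvX] .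
      show "u < hi (Suc v)" using bf G by simp
      have "Suc v \<notin> c u" using c_iv[OF G(1)] huv by simp
      then show "c u \<noteq> c (hi (Suc v))" using lo_hi_X[OF SvX] c_in[OF SvX] by auto
      fix s assume s: "bd s \<and> u \<le> s \<and> s < hi (Suc v)"
      show "common P (pr s)"
      proof (cases "s < v")
        case True then show ?thesis using G(7) s by simp
      next
        case False
        show ?thesis
        proof (cases "s = v")
          case True then show ?thesis using pv by simp
        next
          case False
          then have "\<not> bd s" using not_bd_within[OF SvX, of s] s bf \<open>\<not> s < v\<close> by simp
          then show ?thesis using s by simp
        qed
      qed
    qed
    from mx[OF this] have "hi (Suc v) - u \<le> v - u" by simp
    then show False using bf G by simp
  next
    assume h: "f < u \<and> u \<le> g \<and> g < v"
    define b' where "b' = hi u"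
    have hgg: "hi g = g" using clF[of g] c_iv(3)[OF gX] fg by simp
    have gb: "b' \<le> g"
    proof (rule ccontr)
      assume "\<not> b' \<le> g"
      then have "c g = c u" using c_same[OF G(1) gX] h G b'_def by simp
      then have "hi g = b'" using b'_def unfolding hi_def by simp
      then show False using hgg \<open>\<not> b' \<le> g\<close> by simp
    qed
    have A: "common P {f..b'}"
    proof (cases "g = b'")
      case True then show ?thesis using F(1) fg by simp
    next
      case False
      then have gb': "b' < g" using gb by simp
      have "Suc g \<in> {u..v}" using h by auto
      then have SgX: "Suc g \<in> X" using RX by blast
      have "Suc g \<notin> c g" using c_iv[OF gX] hgg by simp
      then have bg: "bd g" unfolding bd_def using gX SgX c_in[OF SgX] by auto
      have bX: "b' \<in> X" "c b' = c u" using lo_hi_X[OF G(1)] b'_def by auto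
      have "Suc b' \<in> {u..v}" using h gb' huv b'_def c_iv[OF G(1)] by auto
      then have SbX: "Suc b' \<in> X" using RX by blast
      have "Suc b' \<notin> c u" using c_iv[OF G(1)] b'_def by simp
      then have "c b' \<noteq> c (Suc b')" using bX c_in[OF SbX] by auto
      then have bb: "bd b'" unfolding bd_def using bX SbX by simp
      have lb: "lo (Suc b') = Suc b'" using bd_facts(2)[OF bb] .
      have hSg: "hi (Suc g) \<le> v" using clR(2)[of "Suc g"] h by simp
      have gSg: "Suc g \<le> hi (Suc g)" using bd_facts(6)[OF bg] .
      have hX: "hi (Suc g) \<in> X" using lo_hi_X[OF SgX] by simp
      have ub: "u \<le> Suc b'" using c_iv(3)[OF G(1)] b'_def by linarith
      have gd: "\<forall>s. bd s \<and> Suc b' \<le> s \<and> s < hi (Suc g) \<longrightarrow> common P (pr s)"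
      proof (intro allI impI)
        fix s assume s: "bd s \<and> Suc b' \<le> s \<and> s < hi (Suc g)"
        then have "u \<le> s" "s < v" using ub hSg by linarith+
        then show "common P (pr s)" using G(7) s by blast
      qed
      have "Suc b' \<le> hi (Suc g)" using gb' gSg by linarith
      then have B: "common P {Suc b'..hi (Suc g)}"
        using runs[OF gd SbX hX lb hi_hi[OF SgX]] by blast
      have o1: "{Suc b'..hi (Suc g)} \<inter> F \<noteq> {}" "\<not> {Suc b'..hi (Suc g)} \<subseteq> F"
        "\<not> F \<subseteq> {Suc b'..hi (Suc g)}"
        using fg h gb' gSg huv b'_def c_iv(3)[OF G(1)] by auto
      have "F - {Suc b'..hi (Suc g)} = {f..b'}" using fg gb' gSg h huv b'_def c_iv(3)[OF G(1)] by auto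
      then show ?thesis using common_ops(3)[OF F(1) B] o1 by (simp add: Int_commute)
    qed
    define w where "w = u - 1"
    have Sw: "Suc w = u" using h w_def by simp
    have "w \<in> {f..u}" using h w_def by auto
    then have wX: "w \<in> X" using iv_subX[OF fX G(1)] by blast
    have "w \<notin> c u" using c_iv[OF G(1)] G Sw by auto
    then have bw: "bd w" unfolding bd_def using wX Sw G(1) c_in[OF wX] by auto
    note bf = bd_facts[OF bw]
    have hb: "hi (Suc w) = b'" using Sw b'_def by simp
    have "{f..b'} \<subseteq> X" using iv_subX[OF fX] lo_hi_X[OF G(1)] b'_def by simp
    moreover have "v \<notin> {f..b'}" using huv b'_def by auto
    then have "{f..b'} \<noteq> X" using G(2) by blast
    moreover have "f \<le> w" using h Sw by linarith
    ultimately have pw: "common P (pr w)" using pairL[OF bw, of f] A hb by simp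
    have lwX: "lo w \<in> X" using lo_hi_X[OF wX] by simp
    have "good (lo w, v)"
      unfolding good_def
    proof (simp only: prod.case, intro conjI allI impI)
      show "v \<in> X" "hi v = v" using G by auto
      show "lo w \<in> X" using lwX .
      show "lo (lo w) = lo w" using lo_lo[OF wX] .
      show "lo w < v" using bf G Sw by simp
      have "w \<notin> c v" using c_iv[OF G(2)] luv Sw by simp
      then show "c (lo w) \<noteq> c v" using lo_hi_X[OF wX] c_in[OF wX] by auto
      fix s assume s: "bd s \<and> lo w \<le> s \<and> s < v"
      show "common P (pr s)"
      proof (cases "u \<le> s")
        case True then show ?thesis using G(7) s by simp
      next
        case False
        show ?thesis
        proof (cases "s = w")
          case True then show ?thesis using pw by simp
        next
          case False
          then have "\<not> bd s" using not_bd_within[OF wX, of s] s bf \<open>\<not> u \<le> s\<close> Sw by simp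
          then show ?thesis using s by simp
        qed
      qed
    qed
    from mx[OF this] have "v - lo w \<le> v - u" by simp
    then show False using bf G Sw by simp
  qed
qed

lemma qruns: "u \<in> X \<Longrightarrow> v \<in> X \<Longrightarrow> lo u = u \<Longrightarrow> hi v = v \<Longrightarrow> u \<le> v \<Longrightarrow> common P {u..v}"
  using runs allpairs by blast

lemma c_child: "Y \<in> children P X \<Longrightarrow> y \<in> Y \<Longrightarrow> c y = Y"
proof -
  assume Y: "Y \<in> children P X" "y \<in> Y"
  have yX: "y \<in> X" using Y children_D by blast
  show "c y = Y" using children_disj[of "c y" X Y] c_in[OF yX] Y by blast
qed
end


lemma chain_lt:
  fixes xs :: "nat set list"
  assumes ne: "\<forall>y\<in>set xs. y \<noteq> {} \<and> finite y"
    and ch: "\<forall>i. Suc i < length xs \<longrightarrow> Max (xs ! i) + 1 = Min (xs ! Suc i)"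
  shows "i < j \<Longrightarrow> j < length xs \<Longrightarrow> Max (xs ! i) < Min (xs ! j)"
proof (induction j)
  case 0 then show ?case by simp
next
  case (Suc j)
  have e: "Max (xs ! j) + 1 = Min (xs ! Suc j)" using ch Suc.prems by blast
  show ?case
  proof (cases "i = j")
    case True then show ?thesis using e by simp
  next
    case False
    then have "Max (xs ! i) < Min (xs ! j)" using Suc by simp
    moreover have "xs ! j \<in> set xs" using Suc.prems by simp
    then have "xs ! j \<noteq> {}" "finite (xs ! j)" using ne by auto
    then have "Min (xs ! j) \<le> Max (xs ! j)" by (simp add: Min_le_iff)
    ultimately show ?thesis using e by simp
  qed
qed

context perms begin

lemma dom_struct:
  assumes QI: "Q_interval P I"
  shows "\<exists>X. Qnode P X \<and> domain P I \<subseteq> children P X \<and> \<Union>(domain P I) = I \<and> 2 \<le> card (domain P I)"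
proof (cases "strong P I")
  case True
  then have QN: "Qnode P I" using QI unfolding Q_interval_def P_interval_def Qnode_def by simp
  have d: "domain P I = children P I" using True unfolding domain_def by simp
  obtain D where D: "D \<subset> children P I" "2 \<le> card D" "card D < card (children P I)"
    using Qnode_D(2)[OF QN] by blast
  have "\<Union>(children P I) = I" using union_children[OF True] Qnode_nonsingle[OF QN] by blast
  then show ?thesis using QN d D by auto
next
  case False
  have cI: "common P I" using QI unfolding Q_interval_def by simp
  have Ine: "I \<noteq> {}" using common_ne[OF cI] .
  define T where "T = {Z. strong P Z \<and> I \<subseteq> Z}"
  have "{1..n} \<in> T" unfolding T_def using root_strong common_sub[OF cI] by simp
  then obtain X0 where X0: "X0 \<in> T" "\<And>Z. Z \<in> T \<Longrightarrow> card X0 \<le> card Z"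
    using ex_has_least_nat[of "\<lambda>Z. Z \<in> T" "{1..n}" card] by blast
  have sX0: "strong P X0" and IX0: "I \<subseteq> X0" using X0 unfolding T_def by auto
  have minX0: "X0 \<subseteq> Z" if "strong P Z" "I \<subseteq> Z" for Z
  proof -
    have "X0 \<inter> Z \<noteq> {}" using IX0 that Ine by blast
    then have "X0 \<subseteq> Z \<or> Z \<subseteq> X0" using laminar[OF sX0 strong_common[OF that(1)]] by blast
    then show ?thesis
    proof
      assume ZX: "Z \<subseteq> X0"
      show ?thesis
      proof (rule ccontr)
        assume "\<not> X0 \<subseteq> Z"
        then have "Z \<subset> X0" using ZX by blast
        then have "card Z < card X0" using strong_in_root[OF sX0] finite_subset
          by (metis finite_atLeastAtMost psubset_card_mono)
        moreover have "card X0 \<le> card Z" using X0(2) that unfolding T_def by simp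
        ultimately show False by simp
      qed
    qed
  qed
  have IneX0: "I \<noteq> X0" using False sX0 by blast
  have nsX0: "X0 \<noteq> {x}" for x using IX0 Ine IneX0 by blast
  define D0 where "D0 = {Y \<in> children P X0. Y \<subseteq> I}"
  have U: "\<Union>D0 = I"
  proof
    show "\<Union>D0 \<subseteq> I" unfolding D0_def by blast
    show "I \<subseteq> \<Union>D0"
    proof
      fix x assume x: "x \<in> I"
      obtain Y where Y: "Y \<in> children P X0" "x \<in> Y" using child_exists[OF sX0 _ nsX0] x IX0 by blast
      have sY: "strong P Y" "Y \<subset> X0" using children_D[OF Y(1)] by auto
      have "Y \<subseteq> I \<or> I \<subseteq> Y" using laminar[OF sY(1) cI] Y x by blast
      moreover have "\<not> I \<subseteq> Y" using minX0[OF sY(1)] sY(2) by blast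
      ultimately show "x \<in> \<Union>D0" using Y unfolding D0_def by blast
    qed
  qed
  have finc: "finite (children P X0)" using children_fin .
  have fD0: "finite D0" using finc unfolding D0_def by simp
  have D0sub: "D0 \<subset> children P X0"
  proof -
    have "D0 \<noteq> children P X0"
    proof
      assume "D0 = children P X0"
      then have "\<Union>(children P X0) = I" using U by simp
      then show False using union_children[OF sX0 nsX0] IneX0 by simp
    qed
    then show ?thesis unfolding D0_def by blast
  qed
  have cD0: "2 \<le> card D0"
  proof (rule ccontr)
    assume "\<not> 2 \<le> card D0"
    then have "card D0 \<le> Suc 0" by simp
    then have all: "\<forall>a1\<in>D0. \<forall>a2\<in>D0. a1 = a2" using card_le_Suc0_iff_eq[OF fD0] by blast
    show False
    proof (cases "D0 = {}")
      case True then show False using U Ine by simp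
    next
      case False
      then obtain Y where "Y \<in> D0" by blast
      then have "D0 = {Y}" using all by blast
      then have "I = Y" using U by simp
      then show False using \<open>Y \<in> D0\<close> \<open>\<not> strong P I\<close> children_D unfolding D0_def by blast
    qed
  qed
  have QN: "Qnode P X0"
    unfolding Qnode_def Pnode_def
    using sX0 D0sub cD0 psubset_card_mono[OF finc D0sub] U cI by auto
  define Pd where "Pd D \<longleftrightarrow> (\<exists>X. Qnode P X \<and> D \<subseteq> children P X \<and> \<Union>D = I \<and>
             (\<forall>Y\<in>children P X. Min I \<le> Min Y \<and> Max Y \<le> Max I \<longrightarrow> Y \<in> D))" for D
  have PD0: "Pd D0"
    unfolding Pd_def
  proof (intro exI[of _ X0] conjI ballI impI)
    show "Qnode P X0" by fact
    show "D0 \<subseteq> children P X0" "\<Union>D0 = I" using D0sub U by auto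
    fix Y assume Y: "Y \<in> children P X0" "Min I \<le> Min Y \<and> Max Y \<le> Max I"
    have eq: "{Min I..Max I} = I" using common_iv2(1)[OF cI] by simp
    have "Y \<subseteq> I"
    proof
      fix x assume x: "x \<in> Y"
      have fY: "finite Y" using common_fin strong_common children_D[OF Y(1)] by blast
      have "Min Y \<le> x" "x \<le> Max Y" using Min_le[OF fY x] Max_ge[OF fY x] by auto
      then have "x \<in> {Min I..Max I}" using Y(2) by auto
      then show "x \<in> I" by (metis eq)
    qed
    then show "Y \<in> D0" using Y(1) unfolding D0_def by simp
  qed
  have uniq: "D = D0" if pd: "Pd D" for D
  proof -
    obtain X where X: "Qnode P X" "D \<subseteq> children P X" "\<Union>D = I"
      "\<forall>Y\<in>children P X. Min I \<le> Min Y \<and> Max Y \<le> Max I \<longrightarrow> Y \<in> D"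
      using pd unfolding Pd_def by blast
    have sX: "strong P X" using Qnode_D(1)[OF X(1)] .
    have IX: "I \<subseteq> X" using X(2,3) children_D by blast
    have X0X: "X0 \<subseteq> X" using minX0[OF sX IX] .
    show "D = D0"
    proof (cases "X0 = X")
      case True
      show ?thesis
      proof
        show "D \<subseteq> D0" using X(2,3) True unfolding D0_def by blast
        show "D0 \<subseteq> D"
        proof
          fix Y assume Y: "Y \<in> D0"
          then have Yc: "Y \<in> children P X" "Y \<subseteq> I" using True unfolding D0_def by auto
          have Yne: "Y \<noteq> {}" using children_D[OF Yc(1)] strong_common common_ne by blast
          have fI: "finite I" using common_fin[OF cI] .
          have "Min I \<le> Min Y" using Min_antimono[OF Yc(2) Yne fI] .
          moreover have "Max Y \<le> Max I" using Max_mono[OF Yc(2) Yne fI] .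
          ultimately show "Y \<in> D" using X(4) Yc by blast
        qed
      qed
    next
      case False
      then have X0X': "X0 \<subset> X" using X0X by blast
      obtain x where x: "x \<in> I" using Ine by blast
      have nsX: "X \<noteq> {y}" for y using X0X' IX0 Ine by blast
      obtain Z where Z: "Z \<in> children P X" "x \<in> Z" using child_exists[OF sX _ nsX] x IX by blast
      have sZ: "strong P Z" using children_D[OF Z(1)] by blast
      have "Z \<subseteq> X0 \<or> X0 \<subseteq> Z" using laminar[OF sZ strong_common[OF sX0]] Z x IX0 by blast
      then have "X0 \<subseteq> Z"
      proof
        assume "Z \<subseteq> X0"
        show "X0 \<subseteq> Z"
        proof (rule ccontr)
          assume "\<not> X0 \<subseteq> Z"
          then have "Z \<subset> X0" using \<open>Z \<subseteq> X0\<close> by blast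
          then have "X \<subseteq> X0" using children_max[OF Z(1) sX0] by blast
          then show False using X0X' by blast
        qed
      qed
      then have IZ: "I \<subseteq> Z" using IX0 by blast
      have "Y = Z" if "Y \<in> D" for Y
      proof -
        have "Y \<subseteq> I" using that X(3) by blast
        moreover have "Y \<noteq> {}" using that X(2) children_D strong_common common_ne by blast
        ultimately have "Y \<inter> Z \<noteq> {}" using IZ by blast
        then show "Y = Z" using children_disj[of Y X Z] that X(2) Z(1) by blast
      qed
      then have "I \<subseteq> Z" "\<Union>D \<subseteq> Z" using IZ by auto
      moreover have "D \<noteq> {}" using X(3) Ine by auto
      ultimately have "I = Z" using X(3) \<open>\<And>Y. Y \<in> D \<Longrightarrow> Y = Z\<close> by blast
      then show ?thesis using sZ False \<open>\<not> strong P I\<close> by simp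
    qed
  qed
  have "domain P I = D0"
    unfolding domain_def using False
    by (simp only: if_False) (rule the_equality, use PD0 Pd_def in simp, use uniq Pd_def in simp)
  then show ?thesis using QN D0sub U cD0 by auto
qed

end

theorem lemma3:
  fixes n b :: nat and P :: "nat list list" and I :: "nat set" and xs :: "nat set list"
  assumes "n \<ge> 1" and "P \<noteq> []" and "hd P = [1..<n+1]"
    and "\<forall>p\<in>set P. distinct p \<and> set p = {1..n}"
    and "b > 0"
    and "Q_interval P I"
    and "set xs = domain P I" and "distinct xs"
    and "\<forall>i. Suc i < length xs \<longrightarrow> Max (xs ! i) + 1 = Min (xs ! Suc i)"
  shows "nested P b I \<longleftrightarrow>
           (small b (hd xs) \<and> nested P b (I - hd xs)) \<or>
           (small b (last xs) \<and> nested P b (I - last xs))"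
proof -
  interpret perms n P using assms(1-4) by unfold_locales
  obtain X where X: "Qnode P X" "set xs \<subseteq> children P X" "\<Union>(set xs) = I" "2 \<le> card (set xs)"
    using dom_struct[OF assms(6)] assms(7) by auto
  interpret qn n P X using X(1) by unfold_locales
  have cI: "common P I" using assms(6) unfolding Q_interval_def by simp
  have fI: "finite I" using common_fin[OF cI] .
  have len: "2 \<le> length xs" using X(4) distinct_card[OF assms(8)] by simp
  define r where "r = length xs"
  define x1 where "x1 = hd xs"
  define xr where "xr = last xs"
  have xsne: "xs \<noteq> []" using len by auto
  have x1n: "x1 = xs ! 0" using xsne x1_def by (simp add: hd_conv_nth)
  have xrn: "xr = xs ! (r - 1)" using xsne xr_def r_def by (simp add: last_conv_nth)
  have elem: "y \<in> children P X" "strong P y" "common P y" "y \<noteq> {}" "finite y" "y \<subseteq> I"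
    if "y \<in> set xs" for y
  proof -
    show "y \<in> children P X" using X(2) that by blast
    then show "strong P y" using children_D by blast
    then show c: "common P y" using strong_common by blast
    show "y \<noteq> {}" using common_ne[OF c] .
    show "finite y" using common_fin[OF c] .
    show "y \<subseteq> I" using X(3) that by blast
  qed
  have x1s: "x1 \<in> set xs" "xr \<in> set xs" using xsne x1_def xr_def by auto
  have ne: "\<forall>y\<in>set xs. y \<noteq> {} \<and> finite y" using elem by blast
  have lt: "Max (xs ! i) < Min (xs ! j)" if "i < j" "j < r" for i j
    using chain_lt[OF ne assms(9) that(1)] that r_def by simp
  have mm: "Min y \<le> Max y" if "y \<in> set xs" for y
    using elem[OF that] by (simp add: Min_le_iff)
  have x1r: "Max x1 < Min xr" using lt[of 0 "r-1"] len r_def x1n xrn by simp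
  have minI: "Min x1 \<le> z" if zI: "z \<in> I" for z
  proof -
    obtain y where y: "y \<in> set xs" "z \<in> y" using X(3) zI by blast
    then obtain j where j: "j < r" "y = xs ! j" using r_def by (auto simp: in_set_conv_nth)
    have "Min y \<le> z" using Min_le[OF _ y(2)] elem(5)[OF y(1)] by simp
    moreover have "Min x1 \<le> Min y"
    proof (cases "j = 0")
      case True then show ?thesis using j x1n by simp
    next
      case False
      then have "Max x1 < Min y" using lt[of 0 j] j x1n by simp
      then show ?thesis using mm[OF x1s(1)] by simp
    qed
    ultimately show ?thesis by simp
  qed
  have maxI: "z \<le> Max xr" if zI: "z \<in> I" for z
  proof -
    obtain y where y: "y \<in> set xs" "z \<in> y" using X(3) zI by blast
    then obtain j where j: "j < r" "y = xs ! j" using r_def by (auto simp: in_set_conv_nth)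
    have "z \<le> Max y" using Max_ge[OF _ y(2)] elem(5)[OF y(1)] by simp
    moreover have "Max y \<le> Max xr"
    proof (cases "j = r - 1")
      case True then show ?thesis using j xrn by simp
    next
      case False
      then have "Max y < Min xr" using lt[of j "r-1"] j xrn by simp
      then show ?thesis using mm[OF x1s(2)] by simp
    qed
    ultimately show ?thesis by simp
  qed
  have mx1: "Min x1 \<in> x1" "Max x1 \<in> x1" using elem[OF x1s(1)] by auto
  have mxr: "Min xr \<in> xr" "Max xr \<in> xr" using elem[OF x1s(2)] by auto
  have Iiv: "I = {Min x1..Max xr}"
  proof
    show "I \<subseteq> {Min x1..Max xr}" using minI maxI by auto
    have "Min x1 \<in> I" "Max xr \<in> I" using mx1 mxr elem(6) x1s by blast+
    moreover obtain i1 i2 where "I = {i1..i2}" using common_iv[OF cI] by blast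
    ultimately show "{Min x1..Max xr} \<subseteq> I" by auto
  qed
  obtain a1 b1 where A1: "x1 = {a1..b1}" "a1 \<le> b1" using common_iv[OF elem(3)[OF x1s(1)]] by blast
  then have mn1: "Min x1 = a1" "Max x1 = b1" using Min_iv Max_iv by auto
  obtain ar br where Ar: "xr = {ar..br}" "ar \<le> br" using common_iv[OF elem(3)[OF x1s(2)]] by blast
  then have mnr: "Min xr = ar" "Max xr = br" using Min_iv Max_iv by auto
  have IX: "I \<subseteq> X" using X(2,3) children_D by blast
  have dI1: "I - x1 = {Suc (Max x1)..Max xr}"
  proof -
    show ?thesis using Iiv A1 mn1 mnr by auto
  qed
  have dIr: "I - xr = {Min x1..Min xr - 1}"
  proof -
    have "Min x1 < ar" using x1r mm[OF x1s(1)] mnr by simp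
    then show ?thesis using Iiv Ar mnr by auto
  qed
  have c1: "common P (I - x1)"
  proof -
    define u where "u = Suc (Max x1)"
    define v where "v = Max xr"
    have uv: "u \<le> v" using x1r mm[OF x1s(2)] u_def v_def by simp
    have uI: "u \<in> I" "v \<in> I" using Iiv uv u_def v_def mm[OF x1s(1)] by auto
    have uX: "u \<in> X" "v \<in> X" using uI IX by auto
    have cm: "c (Max x1) = x1" using c_child elem(1)[OF x1s(1)] mx1 by blast
    have lu: "lo u = u"
    proof (rule ccontr)
      assume "lo u \<noteq> u"
      then have "lo u \<le> Max x1" using c_iv(2)[OF uX(1)] u_def by simp
      moreover have "Max x1 \<in> X" using IX mx1 elem(6)[OF x1s(1)] by blast
      ultimately have "c (Max x1) = c u" using c_same[OF uX(1)] c_iv(3)[OF uX(1)] u_def by simp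
      then have "u \<in> x1" using cm c_in[OF uX(1)] by simp
      then show False using Max_ge[OF elem(5)[OF x1s(1)]] u_def by fastforce
    qed
    have "c v = xr" using c_child elem(1)[OF x1s(2)] mxr v_def by blast
    then have hv: "hi v = v" unfolding hi_def v_def by simp
    show ?thesis using qruns[OF uX lu hv uv] dI1 u_def v_def by simp
  qed
  have cr: "common P (I - xr)"
  proof -
    define u where "u = Min x1"
    define v where "v = Min xr - 1"
    have uv: "u \<le> v" using x1r mm[OF x1s(1)] u_def v_def by simp
    have uI: "u \<in> I" "v \<in> I" using Iiv uv u_def v_def mm[OF x1s(2)] x1r by auto
    have uX: "u \<in> X" "v \<in> X" using uI IX by auto
    have "c u = x1" using c_child elem(1)[OF x1s(1)] mx1 u_def by blast
    then have lu: "lo u = u" unfolding lo_def u_def by simp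
    have cm: "c (Min xr) = xr" using c_child elem(1)[OF x1s(2)] mxr by blast
    have Sv: "Suc v = Min xr" using x1r v_def by simp
    have hv: "hi v = v"
    proof (rule ccontr)
      assume "hi v \<noteq> v"
      then have "Suc v \<le> hi v" using c_iv(3)[OF uX(2)] by simp
      moreover have "Min xr \<in> X" using IX mxr elem(6)[OF x1s(2)] by blast
      ultimately have "c (Min xr) = c v" using c_same[OF uX(2)] c_iv(2)[OF uX(2)] Sv by simp
      then have "v \<in> xr" using cm c_in[OF uX(2)] by simp
      then show False using Min_le[OF elem(5)[OF x1s(2)]] Sv by fastforce
    qed
    show ?thesis using qruns[OF uX lu hv uv] dIr u_def v_def by simp
  qed
  have s1: "x1 \<subseteq> I" "xr \<subseteq> I" using elem(6) x1s by auto
  have card1: "card I = card (I - x1) + card x1" using card_Diff_subset[OF _ s1(1)] elem(5)[OF x1s(1)]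
    card_mono[OF fI s1(1)] by simp
  have cardr: "card I = card (I - xr) + card xr" using card_Diff_subset[OF _ s1(2)] elem(5)[OF x1s(2)]
    card_mono[OF fI s1(2)] by simp
  have disj: "x1 \<inter> xr = {}" using A1 Ar mn1 mnr x1r by auto
  show ?thesis
  proof
    assume "nested P b I"
    then show "(small b (hd xs) \<and> nested P b (I - hd xs)) \<or> (small b (last xs) \<and> nested P b (I - last xs))"
    proof (cases rule: nested.cases)
      case single
      then obtain a where a: "I = {a}" by (meson card_1_singletonE)
      have "a \<in> {1..n}" using common_sub[OF cI] a by auto
      then have "strong P I" "Pnode P I" using single_strong single_Pnode a by auto
      then show ?thesis using assms(6) unfolding Q_interval_def P_interval_def by simp
    next
      case (step J)
      have cJ: "common P J" using nested_common[OF step(2)] .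
      have fJ: "finite J" using common_fin[OF cJ] .
      show ?thesis
      proof (cases "J \<inter> x1 = {}")
        case True
        then have JI: "J \<subseteq> I - x1" using step(3) by blast
        have "card J \<le> card (I - x1)" using card_mono[OF _ JI] fI by simp
        then have sm: "small b x1" using card1 step(4) unfolding small_def by simp
        have "nested P b (I - x1)"
        proof (cases "J = I - x1")
          case True then show ?thesis using step(2) by simp
        next
          case False
          then have "J \<subset> I - x1" using JI by blast
          moreover have "card (I - x1) \<le> card J + b" using card1 step(4) by simp
          ultimately show ?thesis using nested.step[OF c1 step(2)] by simp
        qed
        then show ?thesis using sm x1_def by simp
      next
        case False
        show ?thesis
        proof (cases "J \<inter> xr = {}")
          case True
          then have JI: "J \<subseteq> I - xr" using step(3) by blast
          have "card J \<le> card (I - xr)" using card_mono[OF _ JI] fI by simp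
          then have sm: "small b xr" using cardr step(4) unfolding small_def by simp
          have "nested P b (I - xr)"
          proof (cases "J = I - xr")
            case True then show ?thesis using step(2) by simp
          next
            case False
            then have "J \<subset> I - xr" using JI by blast
            moreover have "card (I - xr) \<le> card J + b" using cardr step(4) by simp
            ultimately show ?thesis using nested.step[OF cr step(2)] by simp
          qed
          then show ?thesis using sm xr_def by simp
        next
          case False2: False
          have "x1 \<subseteq> J \<or> J \<subseteq> x1" using laminar[OF elem(2)[OF x1s(1)] cJ] False by blast
          moreover have "\<not> J \<subseteq> x1" using False2 disj by blast
          ultimately have "x1 \<subseteq> J" by blast
          have "xr \<subseteq> J \<or> J \<subseteq> xr" using laminar[OF elem(2)[OF x1s(2)] cJ] False2 by blast
          moreover have "\<not> J \<subseteq> xr" using False disj by blast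
          ultimately have "xr \<subseteq> J" by blast
          have "Min x1 \<in> J" "Max xr \<in> J" using \<open>x1 \<subseteq> J\<close> \<open>xr \<subseteq> J\<close> mx1 mxr by auto
          moreover obtain j1 j2 where "J = {j1..j2}" using common_iv[OF cJ] by blast
          ultimately have "I \<subseteq> J" using Iiv by auto
          then show ?thesis using step(3) by blast
        qed
      qed
    qed
  next
    assume h: "(small b (hd xs) \<and> nested P b (I - hd xs)) \<or> (small b (last xs) \<and> nested P b (I - last xs))"
    then show "nested P b I"
    proof
      assume h1: "small b (hd xs) \<and> nested P b (I - hd xs)"
      have "I - x1 \<subset> I" using s1 elem(4)[OF x1s(1)] by blast
      moreover have "card I \<le> card (I - x1) + b" using card1 h1 x1_def unfolding small_def by simp
      moreover have "nested P b (I - x1)" using h1 x1_def by simp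
      ultimately show ?thesis using nested.step[OF cI] by blast
    next
      assume h1: "small b (last xs) \<and> nested P b (I - last xs)"
      have "I - xr \<subset> I" using s1 elem(4)[OF x1s(2)] by blast
      moreover have "card I \<le> card (I - xr) + b" using cardr h1 xr_def unfolding small_def by simp
      moreover have "nested P b (I - xr)" using h1 xr_def by simp
      ultimately show ?thesis using nested.step[OF cI] by blast
    qed
  qed
qed

end
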